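(* Let $\Theta$ be a function from the trustworthy sites of a system $N$ to policies, and suppose $N$ is coherent and $\Theta\vdash N:\mathbf{ok}$. If $N\to N'$ (in the reduction with dynamic membranes), then $N'$ is coherent and $\Theta\vdash N':\mathbf{ok}$.
   Context: Fix disjoint sets $\mathsf{Act}$ (actions) and $\mathsf{Loc}$ (localities). A policy is a multiset over $\mathsf{Act}\cup\mathsf{Loc}$ with finite support and multiplicities in $\mathbb{N}\cup\{\omega\}$; $\sqcup$ (also written $\cup$) is multiset union (multiplicities add, $\omega$ absorbing), $T_1\ \mathtt{enforces}\ T_2$ means multiset inclusion $T_1\subseteq T_2$, and $T^\omega$ gives multiplicity $\omega$ to every element of the support of $T$. Agents: $P ::= \mathbf{nil} \mid a.P \mid \mathbf{go}_T\, l.P \mid P\,|\,Q \mid\ !P$. The judgement $\Vdash P:T$ is the least relation with: $\Vdash\mathbf{nil}:\emptyset$; $\Vdash a.P:T\cup\{a\}$ if $\Vdash P:T$; $\Vdash\mathbf{go}_T\,l.P:\{l\}$ if $\Vdash P:T'$ for some $T'\subseteq T$; $\Vdash\ !P:T^\omega$ if $\Vdash P:T$; $\Vdash P|Q:T_1\cup T_2$ if $\Vdash P:T_1$, $\Vdash Q:T_2$. This $T$ is unique when it exists; $\mathrm{Pol}(P)$ denotes it (a partial function). Systems: $N ::= \mathbf{0} \mid l[\![M \rhd P]\!] \mid N_1\parallel N_2$, site names pairwise distinct, $M^l$ the membrane of $l$; a membrane is $M=(M_t,M_p)$, $M_t$ a partial function $\mathsf{Loc}\to\{\mathtt{loc},\mathtt{lgood},\mathtt{lbad}\}$,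 $M_p$ a policy. Structural equivalence: least congruence such that inside a site $|$ is commutative, associative with unit $\mathbf{nil}$, $l[\![M\rhd\ !P|Q]\!]\equiv l[\![M\rhd P|!P|Q]\!]$, and $\parallel$ commutative, associative with unit $\mathbf{0}$. Reduction: (act) $l[\![M\rhd a.P|Q]\!]\to l[\![M\rhd P|Q]\!]$; (par) $N_1\to N_1'$ implies $N_1\parallel N_2\to N_1'\parallel N_2$; (struct) $N\equiv N_1\to N_1'\equiv N'$ implies $N\to N'$; (mig') $k[\![M^k\rhd\mathbf{go}_T\,l.P|Q]\!]\parallel l[\![M^l\rhd R]\!]\to k[\![M^k\rhd Q]\!]\parallel l[\![\widehat M^l\rhd P|R]\!]$ provided, letting $T'=T$ if $M^l_t(k)=\mathtt{lgood}$ and $T'=\mathrm{Pol}(P)$ otherwise (required to be defined): $T'\subseteq M^l_p$, $M^l_p=\widehat M^l_p\sqcup T'$, and $\widehat M^l_t=M^l_t$. Trust order $<:$ reflexive with $\mathtt{loc}<:\mathtt{lbad}$, $\mathtt{loc}<:\mathtt{lgood}$; $k$ trustworthy iff $M^k_t(k)=\mathtt{lgood}$; $N$ coherent iff for every trustworthy $k$ and site $l$ with $M^k_t(l)$ defined, $M^k_t(l)<:M^l_t(l)$. $\Theta\vdash N:\mathbf{ok}$ is the least relation with: $\Theta\vdash\mathbf{0}:\mathbf{ok}$; $\Theta\vdash N_1\parallel N_2:\mathbf{ok}$ if both are; $\Theta\vdash l[\![M\rhd P]\!]:\mathbf{ok}$ if $l$ is trustworthy, $\mathrm{Pol}(P)$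 is defined and $\mathrm{Pol}(P)\sqcup M_p\subseteq\Theta(l)$; $\Theta\vdash l[\![M\rhd P]\!]:\mathbf{ok}$ if $l$ not trustworthy. *)

theory Defs
  imports Main "HOL-Library.Extended_Nat"
begin

text \<open>Actions are the type 'a, localities the type 'l; Act + Loc is the disjoint sum 'a + 'l.
  Multiplicities live in enat, where infinity plays the role of omega (absorbing for +).\<close>

typedef ('a, 'l) policy = "{f :: ('a + 'l) \<Rightarrow> enat. finite {x. f x \<noteq> 0}}"
  morphisms mult Abs_policy
  by (rule exI[of _ "\<lambda>_. 0"]) simp

setup_lifting type_definition_policy

lift_definition pempty :: "('a, 'l) policy" is "\<lambda>_. 0" by simp

lift_definition psingle :: "('a + 'l) \<Rightarrow> ('a, 'l) policy" is
  "\<lambda>x y. if y = x then 1 else 0"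
proof -
  fix x :: "'a + 'l"
  have "{y. (if y = x then 1 else 0 :: enat) \<noteq> 0} \<subseteq> {x}" by auto
  then show "finite {y. (if y = x then 1 else 0 :: enat) \<noteq> 0}" by (rule finite_subset) simp
qed

lift_definition punion :: "('a, 'l) policy \<Rightarrow> ('a, 'l) policy \<Rightarrow> ('a, 'l) policy" is
  "\<lambda>f g x. f x + g x"
proof -
  fix f g :: "'a + 'l \<Rightarrow> enat"
  assume "finite {x. f x \<noteq> 0}" "finite {x. g x \<noteq> 0}"
  moreover have "{x. f x + g x \<noteq> 0} \<subseteq> {x. f x \<noteq> 0} \<union> {x. g x \<noteq> 0}" by auto
  ultimately show "finite {x. f x + g x \<noteq> 0}" by (meson finite_UnI finite_subset)
qed

lift_definition pomega :: "('a, 'l) policy \<Rightarrow> ('a, 'l) policy" is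
  "\<lambda>f x. if f x = 0 then 0 else \<infinity>"
proof -
  fix f :: "'a + 'l \<Rightarrow> enat"
  assume "finite {x. f x \<noteq> 0}"
  moreover have "{x. (if f x = 0 then 0 else \<infinity>) \<noteq> (0::enat)} \<subseteq> {x. f x \<noteq> 0}" by auto
  ultimately show "finite {x. (if f x = 0 then 0 else \<infinity>) \<noteq> (0::enat)}" by (rule finite_subset[rotated])
qed

definition penforces :: "('a, 'l) policy \<Rightarrow> ('a, 'l) policy \<Rightarrow> bool" where
  "penforces T1 T2 \<longleftrightarrow> (\<forall>x. mult T1 x \<le> mult T2 x)"

datatype ('a, 'l) agent =
    ANil
  | APre 'a "('a, 'l) agent"
  | AGo "('a, 'l) policy" 'l "('a, 'l) agent"
  | APar "('a, 'l) agent" "('a, 'l) agent"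
  | ABang "('a, 'l) agent"

inductive haspol :: "('a, 'l) agent \<Rightarrow> ('a, 'l) policy \<Rightarrow> bool" where
  hp_nil: "haspol ANil pempty"
| hp_pre: "haspol P T \<Longrightarrow> haspol (APre a P) (punion T (psingle (Inl a)))"
| hp_go: "haspol P T' \<Longrightarrow> penforces T' T \<Longrightarrow> haspol (AGo T l P) (psingle (Inr l))"
| hp_bang: "haspol P T \<Longrightarrow> haspol (ABang P) (pomega T)"
| hp_par: "haspol P T1 \<Longrightarrow> haspol Q T2 \<Longrightarrow> haspol (APar P Q) (punion T1 T2)"

definition Pol :: "('a, 'l) agent \<Rightarrow> ('a, 'l) policy option" where
  "Pol P = (if (\<exists>T. haspol P T) then Some (THE T. haspol P T) else None)"

datatype trust = TLoc | TLgood | TLbad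

definition trust_le :: "trust \<Rightarrow> trust \<Rightarrow> bool" where
  "trust_le t u \<longleftrightarrow> t = u \<or> (t = TLoc \<and> (u = TLbad \<or> u = TLgood))"

datatype ('a, 'l) membrane = Membrane (Mt: "'l \<Rightarrow> trust option") (Mp: "('a, 'l) policy")

datatype ('a, 'l) sys =
    SZero
  | Site 'l "('a, 'l) membrane" "('a, 'l) agent"
  | SPar "('a, 'l) sys" "('a, 'l) sys"

fun sites :: "('a, 'l) sys \<Rightarrow> ('l \<times> ('a, 'l) membrane \<times> ('a, 'l) agent) list" where
  "sites SZero = []"
| "sites (Site l M P) = [(l, M, P)]"
| "sites (SPar N1 N2) = sites N1 @ sites N2"

definition wf_sys :: "('a, 'l) sys \<Rightarrow> bool" where
  "wf_sys N \<longleftrightarrow> distinct (map fst (sites N))"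

definition membrane_of :: "('a, 'l) sys \<Rightarrow> 'l \<Rightarrow> ('a, 'l) membrane option" where
  "membrane_of N l = map_of (map (\<lambda>(l, M, P). (l, M)) (sites N)) l"

definition trustworthy :: "('a, 'l) sys \<Rightarrow> 'l \<Rightarrow> bool" where
  "trustworthy N k \<longleftrightarrow> (\<exists>M. membrane_of N k = Some M \<and> Mt M k = Some TLgood)"

definition coherent :: "('a, 'l) sys \<Rightarrow> bool" where
  "coherent N \<longleftrightarrow>
     (\<forall>k l Mk Ml t. trustworthy N k \<longrightarrow> membrane_of N k = Some Mk \<longrightarrow>
        membrane_of N l = Some Ml \<longrightarrow> Mt Mk l = Some t \<longrightarrow>
        (\<exists>u. Mt Ml l = Some u \<and> trust_le t u))"

inductive aeq :: "('a, 'l) agent \<Rightarrow> ('a, 'l) agent \<Rightarrow> bool" where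
  aeq_refl: "aeq P P"
| aeq_sym: "aeq P Q \<Longrightarrow> aeq Q P"
| aeq_trans: "aeq P Q \<Longrightarrow> aeq Q R \<Longrightarrow> aeq P R"
| aeq_comm: "aeq (APar P Q) (APar Q P)"
| aeq_assoc: "aeq (APar (APar P Q) R) (APar P (APar Q R))"
| aeq_unit: "aeq (APar P ANil) P"
| aeq_pre: "aeq P Q \<Longrightarrow> aeq (APre a P) (APre a Q)"
| aeq_go: "aeq P Q \<Longrightarrow> aeq (AGo T l P) (AGo T l Q)"
| aeq_par: "aeq P P' \<Longrightarrow> aeq Q Q' \<Longrightarrow> aeq (APar P Q) (APar P' Q')"
| aeq_bang: "aeq P Q \<Longrightarrow> aeq (ABang P) (ABang Q)"

inductive seq :: "('a, 'l) sys \<Rightarrow> ('a, 'l) sys \<Rightarrow> bool" where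
  seq_refl: "seq N N"
| seq_sym: "seq N N' \<Longrightarrow> seq N' N"
| seq_trans: "seq N1 N2 \<Longrightarrow> seq N2 N3 \<Longrightarrow> seq N1 N3"
| seq_site: "aeq P Q \<Longrightarrow> seq (Site l M P) (Site l M Q)"
| seq_bang: "seq (Site l M (APar (ABang P) Q)) (Site l M (APar P (APar (ABang P) Q)))"
| seq_par: "seq N1 N1' \<Longrightarrow> seq N2 N2' \<Longrightarrow> seq (SPar N1 N2) (SPar N1' N2')"
| seq_comm: "seq (SPar N1 N2) (SPar N2 N1)"
| seq_assoc: "seq (SPar (SPar N1 N2) N3) (SPar N1 (SPar N2 N3))"
| seq_unit: "seq (SPar N SZero) N"

inductive red :: "('a, 'l) sys \<Rightarrow> ('a, 'l) sys \<Rightarrow> bool" where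
  red_act: "red (Site l M (APar (APre a P) Q)) (Site l M (APar P Q))"
| red_par: "red N1 N1' \<Longrightarrow> red (SPar N1 N2) (SPar N1' N2)"
| red_struct: "seq N N1 \<Longrightarrow> red N1 N1' \<Longrightarrow> seq N1' N' \<Longrightarrow> red N N'"
| red_mig: "(if Mt Ml k = Some TLgood then Some T else Pol P) = Some T' \<Longrightarrow>
            penforces T' (Mp Ml) \<Longrightarrow>
            Mp Ml = punion (Mp Ml') T' \<Longrightarrow>
            Mt Ml' = Mt Ml \<Longrightarrow>
            red (SPar (Site k Mk (APar (AGo T l P) Q)) (Site l Ml R))
                (SPar (Site k Mk Q) (Site l Ml' (APar P R)))"

inductive sys_ok :: "('l \<Rightarrow> ('a, 'l) policy) \<Rightarrow> ('a, 'l) sys \<Rightarrow> bool" where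
  ok_zero: "sys_ok \<Theta> SZero"
| ok_par: "sys_ok \<Theta> N1 \<Longrightarrow> sys_ok \<Theta> N2 \<Longrightarrow> sys_ok \<Theta> (SPar N1 N2)"
| ok_trust: "Mt M l = Some TLgood \<Longrightarrow> Pol P = Some T \<Longrightarrow> penforces (punion T (Mp M)) (\<Theta> l) \<Longrightarrow>
             sys_ok \<Theta> (Site l M P)"
| ok_untrust: "Mt M l \<noteq> Some TLgood \<Longrightarrow> sys_ok \<Theta> (Site l M P)"

end

theory Submission
  imports Defs
begin

lemma punion_comm: "punion A B = punion B A"
  by transfer (auto simp: add.commute)

lemma punion_assoc: "punion (punion A B) C = punion A (punion B C)"
  by transfer (auto simp: add.assoc)

lemma punion_empty: "punion A pempty = A"
  by transfer auto

lemma punion_omega: "punion A (pomega A) = pomega A"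
  by transfer (auto simp: fun_eq_iff)

lemma pe_trans: "penforces A B \<Longrightarrow> penforces B C \<Longrightarrow> penforces A C"
  unfolding penforces_def by (meson order_trans)

lemma pe_union_right: "penforces A (punion B A)"
  unfolding penforces_def by (simp add: punion.rep_eq)

lemma pe_mono: "penforces A B \<Longrightarrow> penforces C D \<Longrightarrow> penforces (punion A C) (punion B D)"
  unfolding penforces_def by (simp add: punion.rep_eq add_mono)

lemma pe_refl: "penforces A A"
  unfolding penforces_def by simp

lemma pe_drop: "penforces (punion B C) (punion (punion A B) C)"
  unfolding penforces_def punion.rep_eq
  by (metis add.assoc add.commute le_iff_add)

lemma pe_mig: "penforces A B \<Longrightarrow> penforces (punion (punion A C) X) (punion C (punion X B))"
  unfolding penforces_def punion.rep_eq
  by (metis add.commute add.left_commute add_left_mono)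

inductive_cases hp_parE: "haspol (APar P Q) T"
inductive_cases hp_preE: "haspol (APre a P) T"
inductive_cases hp_goE: "haspol (AGo S l P) T"
inductive_cases hp_bangE: "haspol (ABang P) T"
inductive_cases hp_nilE: "haspol ANil T"

lemma haspol_det: "haspol P T1 \<Longrightarrow> haspol P T2 \<Longrightarrow> T1 = T2"
proof (induction P T1 arbitrary: T2 rule: haspol.induct)
  case hp_nil then show ?case by (blast elim: hp_nilE)
next
  case (hp_pre P T a) then show ?case by (blast elim: hp_preE)
next
  case (hp_go P T' T l) then show ?case by (blast elim: hp_goE)
next
  case (hp_bang P T) then show ?case by (blast elim: hp_bangE)
next
  case (hp_par P T1 Q T2) then show ?case by (blast elim: hp_parE)
qed

lemma Pol_Some: "Pol P = Some T \<longleftrightarrow> haspol P T"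
  unfolding Pol_def using haspol_det
  by (auto intro: theI2)

lemma aeq_haspol: "aeq P Q \<Longrightarrow> haspol P T \<longleftrightarrow> haspol Q T"
proof (induction P Q arbitrary: T rule: aeq.induct)
  case (aeq_comm P Q) then show ?case
    by (metis hp_parE hp_par punion_comm)
next
  case (aeq_assoc P Q R)
  show ?case
  proof
    assume "haspol (APar (APar P Q) R) T"
    then obtain A B C where a: "haspol P A" "haspol Q B" "haspol R C"
      "T = punion (punion A B) C" by (blast elim: hp_parE)
    have "haspol (APar P (APar Q R)) (punion A (punion B C))" by (intro hp_par a)
    then show "haspol (APar P (APar Q R)) T" by (simp add: a punion_assoc)
  next
    assume "haspol (APar P (APar Q R)) T"
    then obtain A B C where a: "haspol P A" "haspol Q B" "haspol R C"
      "T = punion A (punion B C)" by (blast elim: hp_parE)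
    have "haspol (APar (APar P Q) R) (punion (punion A B) C)" by (intro hp_par a)
    then show "haspol (APar (APar P Q) R) T" by (simp add: a punion_assoc)
  qed
next
  case (aeq_unit P) show ?case
  proof
    assume "haspol (APar P ANil) T"
    then obtain A B where "haspol P A" "haspol ANil B" "T = punion A B" by (blast elim: hp_parE)
    then show "haspol P T" by (metis hp_nilE punion_empty)
  next
    assume "haspol P T"
    then have "haspol (APar P ANil) (punion T pempty)" by (intro hp_par hp_nil)
    then show "haspol (APar P ANil) T" by (simp add: punion_empty)
  qed
next
  case (aeq_pre P Q a) then show ?case
    by (blast elim: hp_preE intro: hp_pre)
next
  case (aeq_go P Q S l) then show ?case
    by (blast elim: hp_goE intro: hp_go)
next
  case (aeq_par P P' Q Q') then show ?case
    by (blast elim: hp_parE intro: hp_par)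
next
  case (aeq_bang P Q) then show ?case
    by (blast elim: hp_bangE intro: hp_bang)
next
  case (aeq_refl P) then show ?case by simp
next
  case (aeq_sym P Q) then show ?case by simp
next
  case (aeq_trans P Q R) then show ?case by simp
qed

lemma bang_haspol:
  "haspol (APar (ABang P) Q) T \<longleftrightarrow> haspol (APar P (APar (ABang P) Q)) T"
proof
  assume h: "haspol (APar (ABang P) Q) T"
  obtain T1 T2 where b: "T = punion T1 T2" "haspol (ABang P) T1" "haspol Q T2"
    using hp_parE[OF h] by metis
  obtain Ta where c: "T1 = pomega Ta" "haspol P Ta" using hp_bangE[OF b(2)] by metis
  have "haspol (APar P (APar (ABang P) Q)) (punion Ta (punion (pomega Ta) T2))"
    using b c by (intro hp_par hp_bang) auto
  then show "haspol (APar P (APar (ABang P) Q)) T"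
    by (simp add: b c punion_assoc[symmetric] punion_omega)
next
  assume h: "haspol (APar P (APar (ABang P) Q)) T"
  obtain Ta X where b: "T = punion Ta X" "haspol P Ta" "haspol (APar (ABang P) Q) X"
    using hp_parE[OF h] by metis
  obtain T1 T2 where c: "X = punion T1 T2" "haspol (ABang P) T1" "haspol Q T2"
    using hp_parE[OF b(3)] by metis
  obtain Tb where d: "T1 = pomega Tb" "haspol P Tb" using hp_bangE[OF c(2)] by metis
  have "Ta = Tb" using b d haspol_det by blast
  show "haspol (APar (ABang P) Q) T"
    using b c d \<open>Ta = Tb\<close> by (simp add: punion_assoc[symmetric] punion_omega)
qed

lemma ok_site_iff: "sys_ok \<Theta> (Site l M P) \<longleftrightarrow>
   (Mt M l = Some TLgood \<longrightarrow> (\<exists>T. haspol P T \<and> penforces (punion T (Mp M)) (\<Theta> l)))"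
proof
  assume "sys_ok \<Theta> (Site l M P)"
  then show "Mt M l = Some TLgood \<longrightarrow> (\<exists>T. haspol P T \<and> penforces (punion T (Mp M)) (\<Theta> l))"
    by (cases rule: sys_ok.cases) (auto simp: Pol_Some)
next
  assume "Mt M l = Some TLgood \<longrightarrow> (\<exists>T. haspol P T \<and> penforces (punion T (Mp M)) (\<Theta> l))"
  then show "sys_ok \<Theta> (Site l M P)"
    by (metis ok_trust ok_untrust Pol_Some)
qed

lemma ok_par_iff: "sys_ok \<Theta> (SPar N1 N2) \<longleftrightarrow> sys_ok \<Theta> N1 \<and> sys_ok \<Theta> N2"
  by (auto elim: sys_ok.cases intro: sys_ok.intros)

lemma ok_zero_iff: "sys_ok \<Theta> SZero"
  by (rule ok_zero)

definition Smt :: "('a, 'l) sys \<Rightarrow> ('l \<times> ('l \<Rightarrow> trust option)) set" where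
  "Smt N = (\<lambda>(l, M, P). (l, Mt M)) ` set (sites N)"

definition cohS :: "('l \<times> ('l \<Rightarrow> trust option)) set \<Rightarrow> bool" where
  "cohS S \<longleftrightarrow> (\<forall>k mk l ml t. (k, mk) \<in> S \<longrightarrow> mk k = Some TLgood \<longrightarrow> (l, ml) \<in> S \<longrightarrow>
      mk l = Some t \<longrightarrow> (\<exists>u. ml l = Some u \<and> trust_le t u))"

lemma seq_props: "seq N N' \<Longrightarrow> Smt N = Smt N' \<and> (sys_ok \<Theta> N \<longleftrightarrow> sys_ok \<Theta> N')"
proof (induction rule: seq.induct)
  case (seq_site P Q l M)
  then show ?case using aeq_haspol[OF seq_site] by (simp add: Smt_def ok_site_iff)
next
  case (seq_bang l M P Q)
  show ?case by (simp add: Smt_def ok_site_iff bang_haspol)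
next
  case (seq_par N1 N1' N2 N2')
  then show ?case by (simp add: Smt_def ok_par_iff image_Un)
qed (simp_all add: Smt_def ok_par_iff ok_zero_iff image_Un Un_ac conj_ac)

lemma red_Smt: "red N N' \<Longrightarrow> Smt N' = Smt N"
proof (induction rule: red.induct)
  case (red_par N1 N1' N2)
  then show ?case unfolding Smt_def by (simp add: image_Un)
next
  case (red_struct N N1 N1' N')
  then show ?case using seq_props by metis
qed (auto simp: Smt_def)

lemma cohS_mono: "cohS S \<Longrightarrow> S' \<subseteq> S \<Longrightarrow> cohS S'"
  unfolding cohS_def by blast

lemma cohS_good:
  assumes "cohS S" "(l, ml) \<in> S" "(k, mk) \<in> S" "ml l = Some TLgood" "ml k = Some TLgood"
  shows "mk k = Some TLgood"
proof -
  obtain u where "mk k = Some u" "trust_le TLgood u"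
    using assms unfolding cohS_def by blast
  then show ?thesis by (auto simp: trust_le_def)
qed

lemma red_ok: "red N N' \<Longrightarrow> cohS (Smt N) \<Longrightarrow> sys_ok \<Theta> N \<Longrightarrow> sys_ok \<Theta> N'"
proof (induction rule: red.induct)
  case (red_act l M a P Q)
  show ?case unfolding ok_site_iff
  proof
    assume g: "Mt M l = Some TLgood"
    then obtain T where t: "haspol (APar (APre a P) Q) T" "penforces (punion T (Mp M)) (\<Theta> l)"
      using red_act.prems(2) unfolding ok_site_iff by blast
    obtain T1 T2 where b: "T = punion T1 T2" "haspol (APre a P) T1" "haspol Q T2"
      using hp_parE[OF t(1)] by metis
    obtain TP where c: "T1 = punion TP (psingle (Inl a))" "haspol P TP"
      using hp_preE[OF b(2)] by metis
    have "haspol (APar P Q) (punion TP T2)" using b c by (intro hp_par)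
    moreover have "penforces (punion (punion TP T2) (Mp M)) (\<Theta> l)"
    proof -
      have "penforces (punion (punion TP T2) (Mp M)) (punion (punion (punion TP (psingle (Inl a))) T2) (Mp M))"
        by (rule pe_mono[OF _ pe_refl]) (metis pe_drop punion_comm punion_assoc)
      then show ?thesis using t(2) b c pe_trans by metis
    qed
    ultimately show "\<exists>T. haspol (APar P Q) T \<and> penforces (punion T (Mp M)) (\<Theta> l)" by blast
  qed
next
  case (red_par N1 N1' N2)
  then show ?case
    by (auto simp: ok_par_iff Smt_def image_Un intro: cohS_mono)
next
  case (red_struct N N1 N1' N')
  then show ?case using seq_props by metis
next
  case (red_mig Ml k T P T' Ml' Mk l Q R)
  have okk: "sys_ok \<Theta> (Site k Mk (APar (AGo T l P) Q))" and okl: "sys_ok \<Theta> (Site l Ml R)"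
    using red_mig.prems(2) by (auto simp: ok_par_iff)
  have inS: "(k, Mt Mk) \<in> Smt (SPar (Site k Mk (APar (AGo T l P) Q)) (Site l Ml R))"
    "(l, Mt Ml) \<in> Smt (SPar (Site k Mk (APar (AGo T l P) Q)) (Site l Ml R))"
    by (auto simp: Smt_def)
  have kgood: "\<exists>TP. haspol P TP \<and> penforces TP T"
    if kg: "Mt Mk k = Some TLgood"
  proof -
    obtain S where "haspol (APar (AGo T l P) Q) S" using okk kg unfolding ok_site_iff by blast
    then obtain S1 S2 where "haspol (AGo T l P) S1" using hp_parE by metis
    then show ?thesis using hp_goE by metis
  qed
  have A: "sys_ok \<Theta> (Site k Mk Q)"
    unfolding ok_site_iff
  proof
    assume g: "Mt Mk k = Some TLgood"
    then obtain S where t: "haspol (APar (AGo T l P) Q) S" "penforces (punion S (Mp Mk)) (\<Theta> k)"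
      using okk unfolding ok_site_iff by blast
    obtain S1 S2 where b: "S = punion S1 S2" "haspol (AGo T l P) S1" "haspol Q S2"
      using hp_parE[OF t(1)] by metis
    have "penforces (punion S2 (Mp Mk)) (\<Theta> k)"
      using pe_trans[OF pe_drop t(2)[unfolded b(1)]] .
    then show "\<exists>T. haspol Q T \<and> penforces (punion T (Mp Mk)) (\<Theta> k)" using b by blast
  qed
  have B: "sys_ok \<Theta> (Site l Ml' (APar P R))"
    unfolding ok_site_iff
  proof
    assume g': "Mt Ml' l = Some TLgood"
    then have g: "Mt Ml l = Some TLgood" using red_mig.hyps(4) by simp
    then obtain TR where r: "haspol R TR" "penforces (punion TR (Mp Ml)) (\<Theta> l)"
      using okl unfolding ok_site_iff by blast
    obtain TP where p: "haspol P TP" "penforces TP T'"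
    proof (cases "Mt Ml k = Some TLgood")
      case True
      then have "T' = T" using red_mig.hyps(1) by simp
      moreover have "Mt Mk k = Some TLgood"
        using cohS_good[OF red_mig.prems(1) inS(2) inS(1) g True] .
      ultimately show ?thesis using kgood that by blast
    next
      case False
      then have "Pol P = Some T'" using red_mig.hyps(1) by simp
      then show ?thesis using that pe_refl Pol_Some by blast
    qed
    have "haspol (APar P R) (punion TP TR)" using p r by (intro hp_par)
    moreover have "penforces (punion (punion TP TR) (Mp Ml')) (\<Theta> l)"
      using pe_trans[OF pe_mig[OF p(2)]] r(2) red_mig.hyps(3) by (metis punion_assoc)
    ultimately show "\<exists>T. haspol (APar P R) T \<and> penforces (punion T (Mp Ml')) (\<Theta> l)" by blast
  qed
  show ?case using A B by (simp add: ok_par_iff)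
qed

lemma map_fst_sites: "map fst (map (\<lambda>(l, M, P). (l, M)) xs) = map fst xs"
  by (induction xs) auto

lemma memb_D: "membrane_of N l = Some M \<Longrightarrow> \<exists>P. (l, M, P) \<in> set (sites N)"
  unfolding membrane_of_def by (auto dest!: map_of_SomeD)

lemma memb_I: "wf_sys N \<Longrightarrow> (l, M, P) \<in> set (sites N) \<Longrightarrow> membrane_of N l = Some M"
  unfolding membrane_of_def wf_sys_def
proof (rule map_of_is_SomeI)
  assume "distinct (map fst (sites N))" "(l, M, P) \<in> set (sites N)"
  then show "distinct (map fst (map (\<lambda>(l, M, P). (l, M)) (sites N)))"
    by (simp only: map_fst_sites)
  show "(l, M) \<in> set (map (\<lambda>(l, M, P). (l, M)) (sites N))"
    using \<open>(l, M, P) \<in> set (sites N)\<close> by force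
qed

lemma coh_cohS: assumes "wf_sys N" "coherent N" shows "cohS (Smt N)"
  unfolding cohS_def
proof (intro allI impI)
  fix k mk l ml t
  assume a: "(k, mk) \<in> Smt N" "mk k = Some TLgood" "(l, ml) \<in> Smt N" "mk l = Some t"
  obtain Mk Pk where k: "mk = Mt Mk" "(k, Mk, Pk) \<in> set (sites N)" using a(1) unfolding Smt_def by auto
  obtain Ml Pl where l: "ml = Mt Ml" "(l, Ml, Pl) \<in> set (sites N)" using a(3) unfolding Smt_def by auto
  have mk: "membrane_of N k = Some Mk" and ml: "membrane_of N l = Some Ml"
    using memb_I[OF assms(1)] k l by auto
  have "trustworthy N k" using mk a k unfolding trustworthy_def by auto
  then show "\<exists>u. ml l = Some u \<and> trust_le t u"
    using assms(2) mk ml a k l unfolding coherent_def by blast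
qed

lemma cohS_coh: assumes "cohS (Smt N)" shows "coherent N"
  unfolding coherent_def
proof (intro allI impI)
  fix k l Mk Ml t
  assume a: "trustworthy N k" "membrane_of N k = Some Mk" "membrane_of N l = Some Ml" "Mt Mk l = Some t"
  have g: "Mt Mk k = Some TLgood" using a(1,2) unfolding trustworthy_def by auto
  have "(k, Mt Mk) \<in> Smt N" "(l, Mt Ml) \<in> Smt N"
    using memb_D[OF a(2)] memb_D[OF a(3)] unfolding Smt_def by force+
  then show "\<exists>u. Mt Ml l = Some u \<and> trust_le t u"
    using assms g a(4) unfolding cohS_def by blast
qed

theorem mainTheorem10:
  fixes \<Theta> :: "'l \<Rightarrow> ('a, 'l) policy" and N N' :: "('a, 'l) sys"
  assumes "wf_sys N"
    and "coherent N"
    and "sys_ok \<Theta> N"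
    and "red N N'"
  shows "coherent N' \<and> sys_ok \<Theta> N'"
proof -
  have c: "cohS (Smt N)" using coh_cohS assms(1,2) .
  have "cohS (Smt N')" using c red_Smt[OF assms(4)] by simp
  then show ?thesis using cohS_coh red_ok[OF assms(4) c assms(3)] by blast
qed

end
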